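(* Let $q$ be a prime power, $m>1$ an integer, and $j$ an integer with $1\le j\le m-1$ and $\gcd(j,q-1)=1$. Let $\lambda_j(x)=\sum_{0\le i_1<i_2<\cdots<i_j\le m-1}x^{q^{i_1}+\cdots+q^{i_j}}$, the $j$-th elementary symmetric polynomial evaluated at $x,x^q,\ldots,x^{q^{m-1}}$. Then the map $\lambda_j:\mathbf{F}_{q^m}\to\mathbf{F}_q$, $\alpha\mapsto\lambda_j(\alpha)$, is surjective.
   Context: For $\alpha\in\mathbf{F}_{q^m}$ one has $\lambda_j(\alpha)\in\mathbf{F}_q$, so $\lambda_j$ indeed defines a map $\mathbf{F}_{q^m}\to\mathbf{F}_q$. *)

theory Defs
  imports "HOL-Computational_Algebra.Primes"
begin

definition lambda_j :: "nat \<Rightarrow> nat \<Rightarrow> nat \<Rightarrow> 'a::field \<Rightarrow> 'a" where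
  "lambda_j q m j x = (\<Sum>S\<in>{S. S \<subseteq> {0..<m} \<and> card S = j}. x ^ (\<Sum>i\<in>S. q ^ i))"

end

theory Submission
  imports Defs "HOL-Number_Theory.Residues" "HOL-Computational_Algebra.Polynomial"
begin

lemma esum_bound:
  fixes q n :: nat
  assumes "q \<ge> 2" "S \<subseteq> {0..<n}"
  shows "(\<Sum>i\<in>S. q^i) < q^n"
  using assms(2)
proof (induction n arbitrary: S)
  case 0 then show ?case by simp
next
  case (Suc n)
  have fin: "finite S" using Suc.prems finite_subset by blast
  have sub: "S - {n} \<subseteq> {0..<n}" using Suc.prems by auto
  have IH: "(\<Sum>i\<in>S-{n}. q^i) < q^n" using Suc.IH[OF sub] .
  have "(\<Sum>i\<in>S. q^i) \<le> (\<Sum>i\<in>S-{n}. q^i) + q^n"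
  proof (cases "n \<in> S")
    case True then show ?thesis using fin by (simp add: sum.remove)
  next
    case False then show ?thesis by simp
  qed
  also have "\<dots> < q^n + q^n" using IH by simp
  also have "\<dots> = 2 * q^n" by simp
  also have "\<dots> \<le> q * q^n" by (rule mult_le_mono1) (rule assms(1))
  also have "\<dots> = q^Suc n" by simp
  finally show ?case .
qed

lemma esum_inj:
  fixes q n :: nat
  assumes "q \<ge> 2" "S \<subseteq> {0..<n}" "T \<subseteq> {0..<n}" "(\<Sum>i\<in>S. q^i) = (\<Sum>i\<in>T. q^i)"
  shows "S = T"
  using assms(2-4)
proof (induction n arbitrary: S T)
  case 0 thus ?case by simp
next
  case (Suc n)
  have finS: "finite S" using Suc.prems finite_subset by blast
  have finT: "finite T" using Suc.prems finite_subset by blast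
  have bS: "(\<Sum>i\<in>S-{n}. q^i) < q^n" by (rule esum_bound) (use Suc.prems assms(1) in auto)
  have bT: "(\<Sum>i\<in>T-{n}. q^i) < q^n" by (rule esum_bound) (use Suc.prems assms(1) in auto)
  have in1: "(\<Sum>i\<in>A. q^i) = q^n + (\<Sum>i\<in>A-{n}. q^i)" if "finite A" "n \<in> A" for A
    using sum.remove[OF that, of "\<lambda>i. q^i"] .
  have in0: "A - {n} = A" if "n \<notin> A" for A :: "nat set" using that by blast
  have e: "(\<Sum>i\<in>S. q^i) = (\<Sum>i\<in>T. q^i)" by (rule Suc.prems(3))
  have mem: "n \<in> S \<longleftrightarrow> n \<in> T"
  proof
    assume "n \<in> S"
    show "n \<in> T"
    proof (rule ccontr)
      assume "n \<notin> T"
      then show False using e in1[OF finS \<open>n \<in> S\<close>] in0[of T] bT by simp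
    qed
  next
    assume "n \<in> T"
    show "n \<in> S"
    proof (rule ccontr)
      assume "n \<notin> S"
      then show False using e in1[OF finT \<open>n \<in> T\<close>] in0[of S] bS by simp
    qed
  qed
  have "(\<Sum>i\<in>S-{n}. q^i) = (\<Sum>i\<in>T-{n}. q^i)"
  proof (cases "n \<in> S")
    case True
    then have "n \<in> T" using mem by blast
    then show ?thesis using e in1[OF finS True] in1[OF finT] by simp
  next
    case False
    then have "n \<notin> T" using mem by blast
    then show ?thesis using e in0[OF False] in0[of T] by simp
  qed
  then have "S - {n} = T - {n}" by (intro Suc.IH) (use Suc.prems in auto)
  then show ?case using mem by blast
qed

lemma ff_pow_card:
  fixes x :: "'a::{finite,field}"
  shows "x ^ card (UNIV :: 'a set) = x"
proof (cases "x = 0")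
  case False
  have "x * (\<Prod>y\<in>UNIV-{0}. x * y) = x * x ^ (card (UNIV :: 'a set) - 1) * \<Prod>(UNIV-{0})"
    by (simp add: prod.distrib mult_ac)
  also have "x * x ^ (card (UNIV :: 'a set) - 1) = x ^ Suc (card (UNIV :: 'a set) - 1)"
    by (subst power_Suc) auto
  also have "Suc (card (UNIV :: 'a set) - 1) = card (UNIV :: 'a set)"
    using finite_UNIV_card_ge_0[where ?'a = 'a] by simp
  also have "(\<Prod>y\<in>UNIV-{0}. x * y) = (\<Prod>y\<in>UNIV-{0}. y)"
    by (rule prod.reindex_bij_witness[of _ "\<lambda>y. y / x" "\<lambda>y. x * y"]) (use False in auto)
  finally have eq: "x * (\<Prod>y\<in>UNIV-{0}. y) = x ^ card (UNIV :: 'a set) * \<Prod>(UNIV-{0::'a})" .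
  have fU: "finite (UNIV-{0::'a})" by (rule finite_Diff) (rule finite_UNIV)
  have "\<not> (\<exists>a\<in>UNIV-{0::'a}. a = 0)" by blast
  then have nz: "\<Prod>(UNIV-{0::'a}) \<noteq> 0" using prod_zero_iff[OF fU, of "\<lambda>y. y"] by blast
  have "x = x ^ card (UNIV :: 'a set)" using mult_right_cancel[OF nz] eq by blast
  then show ?thesis by (rule sym)
next
  case True
  have "card (UNIV :: 'a set) > 0" by (rule finite_UNIV_card_ge_0) simp
  then show ?thesis using True by (simp add: zero_power)
qed

theorem lemma3p2:
  fixes q m j :: nat
  assumes "\<exists>p k. prime p \<and> k > 0 \<and> q = p ^ k"
    and "m > 1"
    and "1 \<le> j" and "j \<le> m - 1"
    and "gcd j (q - 1) = 1"
    and "card (UNIV :: 'a::{finite,field} set) = q ^ m"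
  shows "(lambda_j q m j :: 'a \<Rightarrow> 'a) ` UNIV = {y :: 'a. y ^ q = y}"
proof -
  obtain p k where pk: "prime p" "k > 0" "q = p ^ k" using assms(1) by blast
  have p2: "p \<ge> 2" using pk(1) prime_ge_2_nat by blast
  have "p \<le> p ^ k" using pk(2) p2 by (simp add: self_le_power)
  then have q2: "q \<ge> 2" using p2 pk(3) by linarith
  have charpos: "CHAR('a) > 0" by (rule finite_imp_CHAR_pos) simp
  have charp: "prime CHAR('a)" using prime_CHAR_semidom[OF charpos] .
  have "CHAR('a) dvd p ^ (k * m)" using CHAR_dvd_CARD[where 'a='a] assms(6) pk(3)
    by (simp add: power_mult)
  then have "CHAR('a) dvd p" using charp prime_dvd_power by blast
  then have charq: "CHAR('a) = p" using charp pk(1) primes_dvd_imp_eq by blast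
  have frob: "\<And>(f :: nat set \<Rightarrow> 'a) A. (sum f A)^q = sum (\<lambda>i. f i^q) A"
    using freshmans_dream_sum'[OF charp, of q k] charq pk(3) by blast
  have frobm: "\<And>x::'a. x^(q^m) = x" using ff_pow_card assms(6) by metis
  define e where "e S = (\<Sum>i\<in>S. q^i)" for S
  define SS where "SS = {S. S \<subseteq> {0..<m} \<and> card S = j}"
  have lam: "\<And>x::'a. lambda_j q m j x = (\<Sum>S\<in>SS. x^(e S))" by (simp add: lambda_j_def e_def SS_def)
  have "SS \<subseteq> Pow {0..<m}" by (auto simp: SS_def)
  then have finSS: "finite SS" using finite_subset by blast

  have Spos: "\<And>S. S \<in> SS \<Longrightarrow> e S > 0"
  proof -
    fix S assume "S \<in> SS"
    then have "S \<noteq> {}" "finite S" using assms(3) by (auto simp: SS_def intro: finite_subset)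
    then obtain i where "i \<in> S" by blast
    then have "q^i \<le> e S" using \<open>finite S\<close> unfolding e_def by (intro member_le_sum) auto
    moreover have "q^i > 0" using q2 by simp
    ultimately show "e S > 0" by linarith
  qed
  have inF: "(lambda_j q m j x)^q = lambda_j q m j x" for x :: 'a
  proof -
    define sh where "sh i = Suc i mod m" for i
    have inj_sh: "inj_on sh {0..<m}"
      unfolding inj_on_def sh_def
    proof (intro ballI impI)
      fix a b assume "a \<in> {0..<m}" "b \<in> {0..<m}" "Suc a mod m = Suc b mod m"
      then show "a = b" by (cases "Suc a = m"; cases "Suc b = m") auto
    qed
    have sh_range: "sh ` {0..<m} \<subseteq> {0..<m}" using assms(2) by (auto simp: sh_def)
    have shS: "(`) sh ` SS \<subseteq> SS"
    proof
      fix T assume "T \<in> (`) sh ` SS"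
      then obtain S where S: "S \<in> SS" "T = sh ` S" by blast
      have "card (sh ` S) = card S" using S inj_sh by (intro card_image inj_on_subset[OF inj_sh]) (auto simp: SS_def)
      then show "T \<in> SS" using S sh_range by (auto simp: SS_def)
    qed
    have injSS: "inj_on ((`) sh) SS"
      unfolding inj_on_def using inj_on_image_eq_iff[OF inj_sh] by (auto simp: SS_def)
    have img: "(`) sh ` SS = SS" using endo_inj_surj[OF finSS shS injSS] .
    have trm: "(x^(e S))^q = x^(e (sh ` S))" if "S \<in> SS" for S
    proof -
      have Ssub: "S \<subseteq> {0..<m}" using that by (auto simp: SS_def)
      have "(x^(e S))^q = x^(\<Sum>i\<in>S. q^Suc i)"
      proof -
        have "e S * q = (\<Sum>i\<in>S. q^Suc i)" by (simp add: e_def sum_distrib_left mult.commute)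
        then show ?thesis by (simp add: power_mult[symmetric])
      qed
      also have "\<dots> = (\<Prod>i\<in>S. x^(q^Suc i))" by (rule power_sum)
      also have "\<dots> = (\<Prod>i\<in>S. x^(q^sh i))"
      proof (rule prod.cong[OF refl])
        fix i assume "i \<in> S"
        then have "i < m" using Ssub by auto
        show "x^(q^Suc i) = x^(q^sh i)"
        proof (cases "Suc i = m")
          case True then show ?thesis using frobm[of x] by (simp add: sh_def)
        next
          case False then show ?thesis using \<open>i < m\<close> by (simp add: sh_def)
        qed
      qed
      also have "\<dots> = (\<Prod>i\<in>sh ` S. x^(q^i))"
        by (simp add: prod.reindex[OF inj_on_subset[OF inj_sh Ssub]])
      also have "\<dots> = x^(e (sh ` S))" by (simp add: e_def power_sum)
      finally show ?thesis .
    qed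
    have "(lambda_j q m j x)^q = (\<Sum>S\<in>SS. (x^(e S))^q)" by (simp add: lam frob)
    also have "\<dots> = (\<Sum>S\<in>SS. x^(e (sh ` S)))" by (rule sum.cong) (auto simp: trm)
    also have "\<dots> = (\<Sum>T\<in>(`) sh ` SS. x^(e T))"
      by (rule sum.reindex[symmetric, unfolded comp_def]) (rule injSS)
    also have "\<dots> = lambda_j q m j x" by (simp add: img lam)
    finally show ?thesis .
  qed

  have scale: "lambda_j q m j (a*x) = a^j * lambda_j q m j x" if aq: "a^q = a" for a x :: 'a
  proof -
    have aqi: "a^(q^i) = a" for i
    proof (induction i)
      case (Suc i)
      have "a^(q^Suc i) = (a^(q^i))^q" by (metis power_Suc2 power_mult)
      then show ?case using Suc aq by simp
    qed simp
    have "(a*x)^(e S) = a^j * x^(e S)" if "S \<in> SS" for S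
    proof -
      have "a^(e S) = (\<Prod>i\<in>S. a^(q^i))" by (simp add: e_def power_sum)
      also have "\<dots> = a^card S" by (simp add: aqi)
      also have "\<dots> = a^j" using that by (simp add: SS_def)
      finally show ?thesis by (simp add: power_mult_distrib)
    qed
    then show ?thesis by (simp add: lam sum_distrib_left)
  qed
  have "\<exists>x0::'a. lambda_j q m j x0 \<noteq> 0"
  proof -
    define P where "P = (\<Sum>S\<in>SS. monom (1::'a) (e S))"
    have polyP: "poly P x = lambda_j q m j x" for x by (simp add: P_def poly_sum poly_monom lam)
    define S0 where "S0 = {0..<j}"
    have S0: "S0 \<in> SS" using assms(2,4) by (auto simp: SS_def S0_def)
    have "coeff P (e S0) = (\<Sum>S\<in>SS. if e S = e S0 then 1 else 0)"
      by (simp add: P_def coeff_sum coeff_monom)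
    also have "\<dots> = (\<Sum>S\<in>SS. if S = S0 then 1 else 0)"
    proof (rule sum.cong[OF refl])
      fix S assume "S \<in> SS"
      then have "e S = e S0 \<longleftrightarrow> S = S0" using S0 esum_inj[OF q2, of S m S0]
        by (auto simp: SS_def e_def)
      then show "(if e S = e S0 then 1 else 0) = (if S = S0 then (1::'a) else 0)" by simp
    qed
    also have "\<dots> = 1" using S0 finSS by simp
    finally have "coeff P (e S0) = 1" .
    then have Pnz: "P \<noteq> 0" by auto
    have "degree P \<le> q^m - 1"
    proof (rule degree_le, intro allI impI)
      fix i assume "q^m - 1 < i"
      have "e S \<noteq> i" if "S \<in> SS" for S
        using esum_bound[OF q2, of S m] that \<open>q^m - 1 < i\<close> by (auto simp: SS_def e_def)
      then show "coeff P i = 0" by (simp add: P_def coeff_sum coeff_monom)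
    qed
    moreover have "q^m > 0" using q2 by simp
    ultimately have "degree P < card (UNIV :: 'a set)" using assms(6) by linarith
    moreover have "card {x. poly P x = 0} \<le> degree P" by (rule card_poly_roots_bound[OF Pnz])
    ultimately have "{x. poly P x = 0} \<noteq> UNIV" by auto
    then obtain x0 where "poly P x0 \<noteq> 0" by auto
    then show ?thesis using polyP by auto
  qed
  then obtain x0 :: 'a where x0: "lambda_j q m j x0 \<noteq> 0" by blast
  define b where "b = lambda_j q m j x0"
  have bq: "b^q = b" using inF b_def by simp
  define G where "G = {a::'a. a \<noteq> 0 \<and> a^q = a}"
  obtain u v where uv: "j * u = (q - 1) * v + gcd j (q - 1)"
    using bezout_nat[of j "q - 1"] assms(3) by auto
  have a1: "a^(q-1) = 1" if "a \<in> G" for a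
  proof -
    have "a^(q-1) * a = a" using that q2 by (simp add: G_def power_Suc2[symmetric])
    then show ?thesis using that by (simp add: G_def)
  qed
  have pwG: "(\<lambda>a. a^j) ` G \<subseteq> G"
  proof
    fix c assume "c \<in> (\<lambda>a. a^j) ` G"
    then obtain a where a: "a \<in> G" "c = a^j" by blast
    have "(a^j)^q = (a^q)^j" by (metis power_mult mult.commute)
    then show "c \<in> G" using a by (simp add: G_def)
  qed
  have pwinj: "inj_on (\<lambda>a. a^j) G"
  proof (rule inj_onI)
    fix a c assume ac: "a \<in> G" "c \<in> G" "a^j = c^j"
    have bk: "(z^j)^u = z" if "z \<in> G" for z
    proof -
      have "(z^j)^u = z^(j*u)" by (simp add: power_mult)
      also have "\<dots> = z^((q-1)*v + 1)" using uv assms(5) by simp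
      also have "\<dots> = (z^(q-1))^v * z" by (simp add: power_add power_mult)
      also have "\<dots> = z" using a1[OF that] by simp
      finally show ?thesis .
    qed
    show "a = c" using bk[OF ac(1)] bk[OF ac(2)] ac(3) by metis
  qed
  have pwsurj: "(\<lambda>a. a^j) ` G = G" by (rule endo_inj_surj[OF _ pwG pwinj]) simp
  show ?thesis
  proof
    show "range (lambda_j q m j :: 'a \<Rightarrow> 'a) \<subseteq> {y. y ^ q = y}"
    proof (rule subsetI)
      fix y :: 'a assume "y \<in> range (lambda_j q m j)"
      then obtain x :: 'a where "y = lambda_j q m j x" by blast
      then show "y \<in> {y. y ^ q = y}" using inF[of x] by simp
    qed
  next
    show "{y. y ^ q = y} \<subseteq> range (lambda_j q m j :: 'a \<Rightarrow> 'a)"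
    proof
      fix y :: 'a assume y: "y \<in> {y. y ^ q = y}"
      show "y \<in> range (lambda_j q m j)"
      proof (cases "y = 0")
        case True
        have "lambda_j q m j (0::'a) = 0" unfolding lam by (intro sum.neutral ballI) (simp add: Spos zero_power)
        then show ?thesis using True by (metis rangeI)
      next
        case False
        have "y / b \<in> G" using False x0 y bq by (simp add: G_def b_def power_divide)
        then obtain a where a: "a \<in> G" "a^j = y / b" using pwsurj by (metis imageE)
        have "lambda_j q m j (a * x0) = y" using scale[of a x0] a x0 by (simp add: G_def b_def)
        then show ?thesis by (metis rangeI)
      qed
    qed
  qed
qed

end
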